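(* Consider a hierarchical tensor factorization with mode tree $\mathcal T$ over $[N]$, numbers $(R_\nu)_{\nu\in\mathrm{int}(\mathcal T)}$, and weight matrices $(W^{(\nu)}(t))_{\nu\in\mathcal T}$ evolving under gradient flow on $\phi_H$ for $t\ge 0$. Assume the unbalancedness magnitude at initialization ($t=0$) is zero. Then for every $\nu\in\mathrm{int}(\mathcal T)$, $r\in[R_\nu]$ and $t\ge 0$: $$\frac{d}{dt}\sigma_{\nu,r}(t)=\sigma_{\nu,r}(t)^{2-\frac{2}{L_\nu}}\,L_\nu\,\big\langle -\nabla\mathcal L_H(\mathcal W_H(t)),\,\mathcal E_{\nu,r}(t)\big\rangle,$$ where $L_\nu:=|C(\nu)|+1$ is the number of weight vectors in a local component at $\nu$.
   Context: Fix $N\in\mathbb N$, $D_1,\dots,D_N\in\mathbb N$; $[K]:=\{1,\dots,K\}$. Norms are Frobenius norms, $\langle\cdot,\cdot\rangle$ the entrywise inner product, $\otimes$ the tensor (outer) product. A mode tree $\mathcal T$ over $[N]$ is a rooted tree whose nodes are labeled by subsets of $[N]$, with exactly $N$ leaves labeled $\{1\},\dots,\{N\}$, and where each interior node's label is the union of its children's labels; nodes are identified with labels, the root is $[N]$, $\mathrm{int}(\mathcal T)$ denotes interior nodes, $Pa(\nu)$ the parent, $C(\nu)$ the children (in a fixed order). A hierarchical tensor factorization is given by $R_\nu\in\mathbb N$ ($\nu\in\mathrm{int}(\mathcal T)$), with conventions $R_{Pa([N])}:=1$, $R_{\{n\}}:=D_n$, and weight matrices $W^{(\nu)}\in\mathbb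 R^{R_\nu\times R_{Pa(\nu)}}$, $\nu\in\mathcal T$. Intermediate tensors: for leaves, $\mathcal W^{(\{n\},r)}:=W^{(\{n\})}_{:,r}$, $r\in[R_{Pa(\{n\})}]$; for $\nu\in\mathrm{int}(\mathcal T)\setminus\{[N]\}$ (from leaves to root) and $r\in[R_{Pa(\nu)}]$, $\mathcal W^{(\nu,r)}:=\pi_\nu\big(\sum_{r'=1}^{R_\nu}W^{(\nu)}_{r',r}\bigotimes_{\nu_c\in C(\nu)}\mathcal W^{(\nu_c,r')}\big)$; the end tensor is $\mathcal W_H:=\pi_{[N]}\big(\sum_{r'=1}^{R_{[N]}}W^{([N])}_{r',1}\bigotimes_{\nu_c\in C([N])}\mathcal W^{(\nu_c,r')}\big)\in\mathbb R^{D_1\times\cdots\times D_N}$. Here $\pi_\nu$ permutes the modes of its input (whose modes correspond, in order, to the elements of the first child in ascending order, then of the second child, etc.) so that they appear in ascending order of the elements of $\nu$. For $\nu\in\mathrm{int}(\mathcal T)$, $r\in[R_\nu]$, $\mathrm{LC}(\nu,r)$ is the collection of vectors $W^{(\nu)}_{r,:}$ and $W^{(\nu_c)}_{:,r}$ ($\nu_c\in C(\nu)$); the $(\nu,r)$'th local component is $W^{(\nu)}_{r,:}\otimes\bigotimes_{\nu_c\in C(\nu)}W^{(\nu_c)}_{:,r}$ and its norm is $\sigma_{\nu,r}:=\prod_{w\in\mathrm{LC}(\nu,r)}\|w\|$. $\mathcal E_{\nu,r}$ denotes the end tensor obtained from the same construction except that, for every $r'\in[R_{Pa(\nu)}]$,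 the tensor produced at node $\nu$ (the end tensor itself if $\nu=[N]$, with $r'=1$) is replaced by $\pi_\nu\big(\sigma_{\nu,r}^{-1}W^{(\nu)}_{r,r'}\bigotimes_{\nu_c\in C(\nu)}\mathcal W^{(\nu_c,r)}\big)$; by convention $\mathcal E_{\nu,r}:=0$ if $\sigma_{\nu,r}=0$. Let $\mathcal L_H:\mathbb R^{D_1\times\cdots\times D_N}\to\mathbb R_{\ge0}$ be differentiable and locally smooth (its gradient is Lipschitz on every compact set), $\phi_H((W^{(\nu)})_{\nu\in\mathcal T}):=\mathcal L_H(\mathcal W_H)$, and gradient flow means $\frac{d}{dt}W^{(\nu)}(t)=-\frac{\partial}{\partial W^{(\nu)}}\phi_H((W^{(\nu')}(t))_{\nu'\in\mathcal T})$ for all $\nu\in\mathcal T$, $t\ge0$; $\mathcal W_H(t),\sigma_{\nu,r}(t),\mathcal E_{\nu,r}(t)$ are computed from the weights at time $t$. The unbalancedness magnitude is $\max_{\nu\in\mathrm{int}(\mathcal T),r\in[R_\nu],w,w'\in\mathrm{LC}(\nu,r)}\big|\|w\|^2-\|w'\|^2\big|$. *)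

theory Defs
  imports "HOL-Analysis.Analysis"
begin

(* ---------------------------------------------------------------------------
   Conventions:
   * Nodes of a mode tree are identified with their labels (subsets of [N]).
   * All matrix/vector/tensor indices are 0-based: r \<in> [R] becomes r < R.
   * A tensor in R^{D_1 x ... x D_N} is a function on index assignments
     idx :: nat \<Rightarrow> nat (idx n = index along mode n), supported on
     tensor_index_set N D.  Tensors "over a node \<nu>" are functions of idx that
     only depend on idx restricted to \<nu>; the outer product over children is
     then the pointwise product, and the mode permutation \<pi>_\<nu> is the identity
     in this representation.
   --------------------------------------------------------------------------- *)

type_synonym tensor = "(nat \<Rightarrow> nat) \<Rightarrow> real"
type_synonym weights = "nat set \<Rightarrow> nat \<Rightarrow> nat \<Rightarrow> real"

definition mode_tree :: "nat \<Rightarrow> nat set set \<Rightarrow> bool" where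
  "mode_tree N T \<longleftrightarrow>
     {1..N} \<in> T \<and>
     (\<forall>n\<in>{1..N}. {n} \<in> T) \<and>
     (\<forall>\<nu>\<in>T. \<nu> \<noteq> {} \<and> \<nu> \<subseteq> {1..N}) \<and>
     (\<forall>a\<in>T. \<forall>b\<in>T. a \<subseteq> b \<or> b \<subseteq> a \<or> a \<inter> b = {})"

definition children :: "nat set set \<Rightarrow> nat set \<Rightarrow> nat set set" where
  "children T \<nu> = {\<mu> \<in> T. \<mu> \<subset> \<nu> \<and> \<not> (\<exists>\<kappa>\<in>T. \<mu> \<subset> \<kappa> \<and> \<kappa> \<subset> \<nu>)}"

definition parent :: "nat set set \<Rightarrow> nat set \<Rightarrow> nat set" where
  "parent T \<nu> = (THE \<kappa>. \<kappa> \<in> T \<and> \<nu> \<in> children T \<kappa>)"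

definition int_nodes :: "nat set set \<Rightarrow> nat set set" where
  "int_nodes T = {\<nu> \<in> T. children T \<nu> \<noteq> {}}"

definition rk :: "nat set set \<Rightarrow> (nat \<Rightarrow> nat) \<Rightarrow> (nat set \<Rightarrow> nat) \<Rightarrow> nat set \<Rightarrow> nat" where
  "rk T D R \<nu> = (if children T \<nu> = {} then D (the_elem \<nu>) else R \<nu>)"

definition rk_pa :: "nat \<Rightarrow> nat set set \<Rightarrow> (nat \<Rightarrow> nat) \<Rightarrow> (nat set \<Rightarrow> nat) \<Rightarrow> nat set \<Rightarrow> nat" where
  "rk_pa N T D R \<nu> = (if \<nu> = {1..N} then 1 else rk T D R (parent T \<nu>))"

definition tensor_index_set :: "nat \<Rightarrow> (nat \<Rightarrow> nat) \<Rightarrow> (nat \<Rightarrow> nat) set" where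
  "tensor_index_set N D =
     {idx. (\<forall>n\<in>{1..N}. idx n < D n) \<and> (\<forall>n. n \<notin> {1..N} \<longrightarrow> idx n = 0)}"

definition tensor_space :: "nat \<Rightarrow> (nat \<Rightarrow> nat) \<Rightarrow> tensor set" where
  "tensor_space N D = {X. \<forall>idx. idx \<notin> tensor_index_set N D \<longrightarrow> X idx = 0}"

definition restrict_tensor :: "nat \<Rightarrow> (nat \<Rightarrow> nat) \<Rightarrow> tensor \<Rightarrow> tensor" where
  "restrict_tensor N D X = (\<lambda>idx. if idx \<in> tensor_index_set N D then X idx else 0)"

definition tinner :: "nat \<Rightarrow> (nat \<Rightarrow> nat) \<Rightarrow> tensor \<Rightarrow> tensor \<Rightarrow> real" where
  "tinner N D X Y = (\<Sum>idx\<in>tensor_index_set N D. X idx * Y idx)"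

definition tnorm :: "nat \<Rightarrow> (nat \<Rightarrow> nat) \<Rightarrow> tensor \<Rightarrow> real" where
  "tnorm N D X = sqrt (tinner N D X X)"

definition is_gradient :: "nat \<Rightarrow> (nat \<Rightarrow> nat) \<Rightarrow> (tensor \<Rightarrow> real) \<Rightarrow> (tensor \<Rightarrow> tensor) \<Rightarrow> bool" where
  "is_gradient N D L G \<longleftrightarrow>
     (\<forall>X\<in>tensor_space N D. G X \<in> tensor_space N D \<and>
        (\<forall>\<epsilon>>0. \<exists>\<delta>>0. \<forall>H\<in>tensor_space N D. tnorm N D H < \<delta> \<longrightarrow>
            \<bar>L (\<lambda>idx. X idx + H idx) - L X - tinner N D (G X) H\<bar> \<le> \<epsilon> * tnorm N D H))"

(* gradient Lipschitz on every compact (equivalently: every bounded) subset *)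
definition locally_smooth :: "nat \<Rightarrow> (nat \<Rightarrow> nat) \<Rightarrow> (tensor \<Rightarrow> tensor) \<Rightarrow> bool" where
  "locally_smooth N D G \<longleftrightarrow>
     (\<forall>B. \<exists>K. \<forall>X\<in>tensor_space N D. \<forall>Y\<in>tensor_space N D.
        tnorm N D X \<le> B \<longrightarrow> tnorm N D Y \<le> B \<longrightarrow>
        tnorm N D (\<lambda>idx. G X idx - G Y idx) \<le> K * tnorm N D (\<lambda>idx. X idx - Y idx))"

(* ten k T R W rep \<nu> r = intermediate tensor W^(\<nu>,r) (fuel k), where
   rep \<mu> r' = Some X replaces the tensor produced at node \<mu> for column r' by X. *)
primrec ten :: "nat \<Rightarrow> nat set set \<Rightarrow> (nat set \<Rightarrow> nat) \<Rightarrow> weights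
    \<Rightarrow> (nat set \<Rightarrow> nat \<Rightarrow> tensor option) \<Rightarrow> nat set \<Rightarrow> nat \<Rightarrow> tensor" where
  "ten 0 T R W rep \<nu> r = (case rep \<nu> r of Some X \<Rightarrow> X | None \<Rightarrow> (\<lambda>_. 0))"
| "ten (Suc k) T R W rep \<nu> r =
     (case rep \<nu> r of Some X \<Rightarrow> X | None \<Rightarrow>
       (if children T \<nu> = {} then (\<lambda>idx. W \<nu> (idx (the_elem \<nu>)) r)
        else (\<lambda>idx. \<Sum>r'<R \<nu>. W \<nu> r' r * (\<Prod>c\<in>children T \<nu>. ten k T R W rep c r' idx))))"

definition end_tensor :: "nat \<Rightarrow> (nat \<Rightarrow> nat) \<Rightarrow> nat set set \<Rightarrow> (nat set \<Rightarrow> nat) \<Rightarrow> weights \<Rightarrow> tensor" where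
  "end_tensor N D T R W = restrict_tensor N D (ten N T R W (\<lambda>_ _. None) {1..N} 0)"

definition row_norm :: "nat \<Rightarrow> (nat \<Rightarrow> nat) \<Rightarrow> nat set set \<Rightarrow> (nat set \<Rightarrow> nat) \<Rightarrow> weights \<Rightarrow> nat set \<Rightarrow> nat \<Rightarrow> real" where
  "row_norm N D T R W \<nu> r = sqrt (\<Sum>j<rk_pa N T D R \<nu>. (W \<nu> r j)\<^sup>2)"

definition col_norm :: "(nat \<Rightarrow> nat) \<Rightarrow> nat set set \<Rightarrow> (nat set \<Rightarrow> nat) \<Rightarrow> weights \<Rightarrow> nat set \<Rightarrow> nat \<Rightarrow> real" where
  "col_norm D T R W \<nu> r = sqrt (\<Sum>i<rk T D R \<nu>. (W \<nu> i r)\<^sup>2)"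

definition lc_norm :: "nat \<Rightarrow> (nat \<Rightarrow> nat) \<Rightarrow> nat set set \<Rightarrow> (nat set \<Rightarrow> nat) \<Rightarrow> weights \<Rightarrow> nat set \<Rightarrow> nat \<Rightarrow> real" where
  "lc_norm N D T R W \<nu> r = row_norm N D T R W \<nu> r * (\<Prod>c\<in>children T \<nu>. col_norm D T R W c r)"

definition lc_end_tensor :: "nat \<Rightarrow> (nat \<Rightarrow> nat) \<Rightarrow> nat set set \<Rightarrow> (nat set \<Rightarrow> nat) \<Rightarrow> weights \<Rightarrow> nat set \<Rightarrow> nat \<Rightarrow> tensor" where
  "lc_end_tensor N D T R W \<nu> r =
     (if lc_norm N D T R W \<nu> r = 0 then (\<lambda>_. 0)
      else restrict_tensor N D
        (ten N T R W
          (\<lambda>\<mu> r'. if \<mu> = \<nu> then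
              Some (\<lambda>idx. W \<nu> r r' / lc_norm N D T R W \<nu> r *
                       (\<Prod>c\<in>children T \<nu>. ten N T R W (\<lambda>_ _. None) c r idx))
            else None)
          {1..N} 0))"

definition lc_sqnorms :: "nat \<Rightarrow> (nat \<Rightarrow> nat) \<Rightarrow> nat set set \<Rightarrow> (nat set \<Rightarrow> nat) \<Rightarrow> weights \<Rightarrow> nat set \<Rightarrow> nat \<Rightarrow> real set" where
  "lc_sqnorms N D T R W \<nu> r =
     insert ((row_norm N D T R W \<nu> r)\<^sup>2) ((\<lambda>c. (col_norm D T R W c r)\<^sup>2) ` children T \<nu>)"

(* unbalancedness magnitude (max over an empty index set taken as 0) *)
definition unbalancedness :: "nat \<Rightarrow> (nat \<Rightarrow> nat) \<Rightarrow> nat set set \<Rightarrow> (nat set \<Rightarrow> nat) \<Rightarrow> weights \<Rightarrow> real" where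
  "unbalancedness N D T R W =
     Max (insert 0 {\<bar>a - b\<bar> | a b \<nu> r. \<nu> \<in> int_nodes T \<and> r < R \<nu> \<and>
                      a \<in> lc_sqnorms N D T R W \<nu> r \<and> b \<in> lc_sqnorms N D T R W \<nu> r})"

definition phi_H :: "nat \<Rightarrow> (nat \<Rightarrow> nat) \<Rightarrow> nat set set \<Rightarrow> (nat set \<Rightarrow> nat) \<Rightarrow> (tensor \<Rightarrow> real) \<Rightarrow> weights \<Rightarrow> real" where
  "phi_H N D T R L W = L (end_tensor N D T R W)"

definition wupd :: "weights \<Rightarrow> nat set \<Rightarrow> nat \<Rightarrow> nat \<Rightarrow> real \<Rightarrow> weights" where
  "wupd W \<nu> i j x = W(\<nu> := (W \<nu>)(i := (W \<nu> i)(j := x)))"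

definition partial_phi :: "nat \<Rightarrow> (nat \<Rightarrow> nat) \<Rightarrow> nat set set \<Rightarrow> (nat set \<Rightarrow> nat) \<Rightarrow> (tensor \<Rightarrow> real) \<Rightarrow> weights \<Rightarrow> nat set \<Rightarrow> nat \<Rightarrow> nat \<Rightarrow> real" where
  "partial_phi N D T R L W \<nu> i j = deriv (\<lambda>x. phi_H N D T R L (wupd W \<nu> i j x)) (W \<nu> i j)"

definition gradient_flow :: "nat \<Rightarrow> (nat \<Rightarrow> nat) \<Rightarrow> nat set set \<Rightarrow> (nat set \<Rightarrow> nat) \<Rightarrow> (tensor \<Rightarrow> real) \<Rightarrow> (real \<Rightarrow> weights) \<Rightarrow> bool" where
  "gradient_flow N D T R L W \<longleftrightarrow>
     (\<forall>\<nu>\<in>T. \<forall>i<rk T D R \<nu>. \<forall>j<rk_pa N T D R \<nu>. \<forall>t\<ge>0.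
        ((\<lambda>s. W s \<nu> i j) has_real_derivative (- partial_phi N D T R L (W t) \<nu> i j)) (at t within {0..}))"

end

theory Submission
  imports Defs
begin

locale mtree =
  fixes N :: nat and T :: "nat set set"
  assumes tree: "mode_tree N T"
begin

lemma root_in: "{1..N} \<in> T" using tree unfolding mode_tree_def by blast
lemma leaf_in: "n \<in> {1..N} \<Longrightarrow> {n} \<in> T" using tree unfolding mode_tree_def by blast
lemma node_ne: "\<nu> \<in> T \<Longrightarrow> \<nu> \<noteq> {}" using tree unfolding mode_tree_def by blast
lemma node_sub: "\<nu> \<in> T \<Longrightarrow> \<nu> \<subseteq> {1..N}" using tree unfolding mode_tree_def by blast
lemma laminar: "a \<in> T \<Longrightarrow> b \<in> T \<Longrightarrow> a \<subseteq> b \<or> b \<subseteq> a \<or> a \<inter> b = {}"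
  using tree unfolding mode_tree_def by blast
lemma finT: "finite T"
proof -
  have "T \<subseteq> Pow {1..N}" using node_sub by blast
  thus ?thesis by (rule finite_subset) simp
qed
lemma node_fin: "\<nu> \<in> T \<Longrightarrow> finite \<nu>" using node_sub finite_subset by blast
lemma node_card: "\<nu> \<in> T \<Longrightarrow> card \<nu> \<ge> 1"
  using node_fin node_ne by (simp add: Suc_le_eq card_gt_0_iff)

lemma ch_T: "c \<in> children T \<nu> \<Longrightarrow> c \<in> T" unfolding children_def by blast
lemma ch_sub: "c \<in> children T \<nu> \<Longrightarrow> c \<subset> \<nu>" unfolding children_def by blast
lemma ch_fin: "finite (children T \<nu>)"
  using finT by (rule finite_subset[rotated]) (auto simp: children_def)
lemma ch_card: "\<nu> \<in> T \<Longrightarrow> c \<in> children T \<nu> \<Longrightarrow> card c < card \<nu>"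
  using ch_sub node_fin psubset_card_mono by blast

lemma ch_disj: "\<nu> \<in> T \<Longrightarrow> c1 \<in> children T \<nu> \<Longrightarrow> c2 \<in> children T \<nu> \<Longrightarrow> c1 \<noteq> c2 \<Longrightarrow> c1 \<inter> c2 = {}"
proof -
  assume a: "\<nu> \<in> T" "c1 \<in> children T \<nu>" "c2 \<in> children T \<nu>" "c1 \<noteq> c2"
  have "c1 \<in> T" "c2 \<in> T" using a ch_T by auto
  from laminar[OF this] show ?thesis
    using a unfolding children_def by blast
qed

lemma exists_child:
  assumes "\<mu> \<in> T" "\<nu> \<in> T" "\<mu> \<subset> \<nu>"
  shows "\<exists>c\<in>children T \<nu>. \<mu> \<subseteq> c"
proof -
  define S where "S = {\<kappa>\<in>T. \<mu> \<subseteq> \<kappa> \<and> \<kappa> \<subset> \<nu>}"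
  have fS: "finite S" using finT unfolding S_def by auto
  have "\<mu> \<in> S" using assms unfolding S_def by auto
  hence ne: "card ` S \<noteq> {}" by auto
  have "Max (card ` S) \<in> card ` S" using fS ne by (intro Max_in) auto
  then obtain \<kappa> where k: "\<kappa> \<in> S" "card \<kappa> = Max (card ` S)" by auto
  have mx: "card \<kappa>' \<le> card \<kappa>" if "\<kappa>' \<in> S" for \<kappa>'
    using k fS that by auto
  have "\<kappa> \<in> children T \<nu>"
  proof -
    have "\<not> (\<exists>\<kappa>'\<in>T. \<kappa> \<subset> \<kappa>' \<and> \<kappa>' \<subset> \<nu>)"
    proof
      assume "\<exists>\<kappa>'\<in>T. \<kappa> \<subset> \<kappa>' \<and> \<kappa>' \<subset> \<nu>"
      then obtain \<kappa>' where "\<kappa>'\<in>T" "\<kappa> \<subset> \<kappa>'" "\<kappa>' \<subset> \<nu>" by blast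
      hence "\<kappa>' \<in> S" "card \<kappa> < card \<kappa>'" using k(1) node_fin unfolding S_def
        by (auto intro: psubset_card_mono)
      thus False using mx by fastforce
    qed
    thus ?thesis using k(1) unfolding S_def children_def by blast
  qed
  thus ?thesis using k(1) unfolding S_def by blast
qed

lemma ch_unique:
  assumes "\<mu> \<in> T" "\<nu> \<in> T" "c \<in> children T \<nu>" "\<mu> \<subseteq> c" "c' \<in> children T \<nu>" "\<mu> \<subseteq> c'"
  shows "c' = c"
  using ch_disj[OF assms(2,3,5)] assms(4,6) node_ne[OF assms(1)] by blast

lemma leaf_single:
  assumes "\<nu> \<in> T" "children T \<nu> = {}"
  shows "\<nu> = {the_elem \<nu>}" "the_elem \<nu> \<in> {1..N}"
proof -
  obtain n where n: "n \<in> \<nu>" using node_ne[OF assms(1)] by blast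
  have nN: "n \<in> {1..N}" using n node_sub[OF assms(1)] by blast
  have "\<nu> = {n}"
  proof (rule ccontr)
    assume "\<nu> \<noteq> {n}"
    hence "{n} \<subset> \<nu>" using n by blast
    from exists_child[OF leaf_in[OF nN] assms(1) this] assms(2) show False by blast
  qed
  thus "\<nu> = {the_elem \<nu>}" "the_elem \<nu> \<in> {1..N}" using nN by auto
qed

lemma parent_ch:
  assumes "\<nu> \<in> T" "c \<in> children T \<nu>"
  shows "parent T c = \<nu>"
  unfolding parent_def
proof (rule the_equality)
  show "\<nu> \<in> T \<and> c \<in> children T \<nu>" using assms by blast
  fix \<kappa> assume k: "\<kappa> \<in> T \<and> c \<in> children T \<kappa>"
  have cne: "c \<noteq> {}" using node_ne ch_T assms by blast
  from laminar[OF assms(1), of \<kappa>] k assms cne show "\<kappa> = \<nu>"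
    unfolding children_def by blast
qed

lemma rk_pa_ch:
  assumes "\<nu> \<in> T" "c \<in> children T \<nu>"
  shows "rk_pa N T D R c = rk T D R \<nu>"
proof -
  have "c \<noteq> {1..N}" using ch_sub[OF assms(2)] node_sub[OF assms(1)] by blast
  thus ?thesis unfolding rk_pa_def using parent_ch[OF assms] by simp
qed

lemma two_children:
  assumes "\<nu> \<in> int_nodes T"
  shows "card (children T \<nu>) \<ge> 2"
proof -
  have nT: "\<nu> \<in> T" using assms unfolding int_nodes_def by blast
  obtain c where c: "c \<in> children T \<nu>" using assms unfolding int_nodes_def by blast
  obtain n where n: "n \<in> \<nu>" "n \<notin> c" using ch_sub[OF c] by blast
  have nN: "n \<in> {1..N}" using n node_sub[OF nT] by blast
  have cne: "c \<noteq> {}" using node_ne ch_T c by blast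
  have "{n} \<subset> \<nu>" using n ch_sub[OF c] cne by blast
  from exists_child[OF leaf_in[OF nN] nT this] obtain c' where
    c': "c' \<in> children T \<nu>" "n \<in> c'" by blast
  have "c \<noteq> c'" using c' n by blast
  hence "{c, c'} \<subseteq> children T \<nu>" "card {c,c'} = 2" using c c' by auto
  thus ?thesis using card_mono[OF ch_fin] by metis
qed

lemma child_not_below:
  assumes "\<mu> \<in> T" "\<nu> \<in> T" "\<not> \<nu> \<subset> \<mu>" "\<nu> \<noteq> \<mu>" "c \<in> children T \<nu>"
  shows "\<not> c \<subset> \<mu>"
proof
  assume cm: "c \<subset> \<mu>"
  have cne: "c \<noteq> {}" using node_ne ch_T assms(5) by blast
  from laminar[OF assms(1,2)] assms(3,4) cm ch_sub[OF assms(5)] cne assms(5)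
  show False unfolding children_def using assms(1) by blast
qed

end

definition repat :: "nat set \<Rightarrow> (nat \<Rightarrow> tensor) \<Rightarrow> nat set \<Rightarrow> nat \<Rightarrow> tensor option" where
  "repat \<mu> X = (\<lambda>\<kappa> r'. if \<kappa> = \<mu> then Some (X r') else None)"

context mtree begin

lemma frame:
  "\<nu> \<in> T \<Longrightarrow> (\<forall>\<kappa>\<in>T. \<kappa> \<subseteq> \<nu> \<longrightarrow> V \<kappa> = V' \<kappa> \<and> rep \<kappa> = rep' \<kappa>)
   \<Longrightarrow> ten k T R V rep \<nu> r = ten k T R V' rep' \<nu> r"
proof (induction k arbitrary: \<nu> r)
  case 0
  then show ?case by simp
next
  case (Suc k)
  have e: "V \<nu> = V' \<nu>" "rep \<nu> = rep' \<nu>" using Suc.prems by auto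
  have IH: "ten k T R V rep c r' = ten k T R V' rep' c r'" if "c \<in> children T \<nu>" for c r'
  proof (rule Suc.IH)
    show "c \<in> T" using ch_T[OF that] .
    have "c \<subseteq> \<nu>" using ch_sub[OF that] by blast
    thus "\<forall>\<kappa>\<in>T. \<kappa> \<subseteq> c \<longrightarrow> V \<kappa> = V' \<kappa> \<and> rep \<kappa> = rep' \<kappa>"
      using Suc.prems(2) by blast
  qed
  have p: "(\<Prod>c\<in>children T \<nu>. ten k T R V rep c r' idx) = (\<Prod>c\<in>children T \<nu>. ten k T R V' rep' c r' idx)" for r' idx
    using IH by (intro prod.cong) auto
  show ?case unfolding ten.simps e p ..
qed

lemma frame_none:
  assumes "\<nu> \<in> T" "\<not> \<mu> \<subseteq> \<nu>" "\<forall>\<kappa>. \<kappa> \<noteq> \<mu> \<longrightarrow> V \<kappa> = V' \<kappa>"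
  shows "ten k T R V (repat \<mu> X) \<nu> r = ten k T R V' (\<lambda>_ _. None) \<nu> r"
  using assms by (intro frame) (auto simp: repat_def fun_eq_iff)

lemma frame_upd:
  assumes "\<nu> \<in> T" "\<not> \<mu> \<subseteq> \<nu>"
  shows "ten k T R (V(\<mu> := M)) rep \<nu> r = ten k T R V rep \<nu> r"
  using assms by (intro frame) auto

lemma ten_Suc_int: "children T \<nu> \<noteq> {} \<Longrightarrow> ten (Suc k) T R V (\<lambda>_ _. None) \<nu> r idx
   = (\<Sum>r'<R \<nu>. V \<nu> r' r * (\<Prod>c\<in>children T \<nu>. ten k T R V (\<lambda>_ _. None) c r' idx))"
  by simp

lemma ten_Suc_leaf: "children T \<nu> = {} \<Longrightarrow> ten (Suc k) T R V (\<lambda>_ _. None) \<nu> r idx = V \<nu> (idx (the_elem \<nu>)) r"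
  by simp

lemma lin:
  assumes "\<mu> \<in> T"
  shows "\<nu> \<in> T \<Longrightarrow> \<mu> \<subseteq> \<nu> \<Longrightarrow>
    ten k T R (V(\<mu> := \<lambda>i j. a * M1 i j + b * M2 i j)) (\<lambda>_ _. None) \<nu> r idx
    = a * ten k T R (V(\<mu> := M1)) (\<lambda>_ _. None) \<nu> r idx + b * ten k T R (V(\<mu> := M2)) (\<lambda>_ _. None) \<nu> r idx"
proof (induction k arbitrary: \<nu> r idx)
  case 0
  then show ?case by simp
next
  case (Suc k)
  show ?case
  proof (cases "\<nu> = \<mu>")
    case True
    have fr: "ten k T R (V(\<mu> := M)) (\<lambda>_ _. None) c r' = ten k T R V (\<lambda>_ _. None) c r'"
      if "c \<in> children T \<nu>" for c r' M
    proof (rule frame_upd)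
      show "c \<in> T" using ch_T[OF that] .
      show "\<not> \<mu> \<subseteq> c" using ch_sub[OF that] True by blast
    qed
    show ?thesis
    proof (cases "children T \<nu> = {}")
      case True2: True
      show ?thesis using True True2 by simp
    next
      case False2: False
      have P: "(\<Prod>c\<in>children T \<nu>. ten k T R (V(\<mu> := M)) (\<lambda>_ _. None) c r' idx) = (\<Prod>c\<in>children T \<nu>. ten k T R V (\<lambda>_ _. None) c r' idx)" for M r'
        by (rule prod.cong[OF refl]) (rule arg_cong[where f="\<lambda>f. f idx"], rule fr)
      show ?thesis unfolding ten_Suc_int[OF False2] P unfolding True fun_upd_same
        by (simp add: sum_distrib_left sum.distrib distrib_right mult.assoc)
    qed
  next
    case False
    hence ps: "\<mu> \<subset> \<nu>" using Suc.prems by blast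
    obtain c0 where c0: "c0 \<in> children T \<nu>" "\<mu> \<subseteq> c0" using exists_child[OF assms Suc.prems(1) ps] by blast
    hence int: "children T \<nu> \<noteq> {}" by blast
    have fr: "ten k T R (V(\<mu> := M)) (\<lambda>_ _. None) c r' = ten k T R V (\<lambda>_ _. None) c r'"
      if "c \<in> children T \<nu> - {c0}" for c r' M
    proof (rule frame_upd)
      show "c \<in> T" using that ch_T by blast
      show "\<not> \<mu> \<subseteq> c" using ch_unique[OF assms Suc.prems(1) c0, of c] that by blast
    qed
    have split: "(\<Prod>c\<in>children T \<nu>. ten k T R (V(\<mu> := M)) (\<lambda>_ _. None) c r' idx)
       = ten k T R (V(\<mu> := M)) (\<lambda>_ _. None) c0 r' idx *
         (\<Prod>c\<in>children T \<nu> - {c0}. ten k T R V (\<lambda>_ _. None) c r' idx)" for M r'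
    proof -
      have "(\<Prod>c\<in>children T \<nu> - {c0}. ten k T R (V(\<mu> := M)) (\<lambda>_ _. None) c r' idx)
          = (\<Prod>c\<in>children T \<nu> - {c0}. ten k T R V (\<lambda>_ _. None) c r' idx)"
        using fr by (intro prod.cong) auto
      thus ?thesis using prod.remove[OF ch_fin c0(1)] by metis
    qed
    have IH: "ten k T R (V(\<mu> := \<lambda>i j. a * M1 i j + b * M2 i j)) (\<lambda>_ _. None) c0 r' idx
       = a * ten k T R (V(\<mu> := M1)) (\<lambda>_ _. None) c0 r' idx + b * ten k T R (V(\<mu> := M2)) (\<lambda>_ _. None) c0 r' idx" for r'
      using Suc.IH[of c0, OF ch_T[OF c0(1)] c0(2)] .
    show ?thesis unfolding ten_Suc_int[OF int] split IH fun_upd_other[OF False] sum_distrib_left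
      by (simp only: sum.distrib[symmetric]) (rule sum.cong[OF refl], simp add: algebra_simps)
  qed
qed


lemma lin_sum:
  assumes "\<mu> \<in> T" "\<nu> \<in> T" "\<mu> \<subseteq> \<nu>" "finite J"
  shows "ten k T R (V(\<mu> := \<lambda>i j. \<Sum>x\<in>J. c x * M x i j)) (\<lambda>_ _. None) \<nu> r idx
       = (\<Sum>x\<in>J. c x * ten k T R (V(\<mu> := M x)) (\<lambda>_ _. None) \<nu> r idx)"
  using assms(4)
proof (induction J rule: finite_induct)
  case empty
  have "ten k T R (V(\<mu> := \<lambda>i j. 0 * (0::real) + 0 * 0)) (\<lambda>_ _. None) \<nu> r idx
     = 0 * ten k T R (V(\<mu> := \<lambda>i j. 0)) (\<lambda>_ _. None) \<nu> r idx + 0 * ten k T R (V(\<mu> := \<lambda>i j. 0)) (\<lambda>_ _. None) \<nu> r idx"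
    by (rule lin[OF assms(1-3)])
  then show ?case by (simp only: mult_zero_left add_0 sum.empty)
next
  case (insert x F)
  have e: "(\<lambda>i j. \<Sum>y\<in>insert x F. c y * M y i j) = (\<lambda>i j. c x * M x i j + 1 * (\<lambda>i j. \<Sum>y\<in>F. c y * M y i j) i j)"
    using insert.hyps by (simp add: fun_eq_iff)
  show ?case unfolding e lin[OF assms(1-3)] insert.IH by (simp only: sum.insert[OF insert.hyps] mult_1_left)
qed

lemma fuel:
  "\<nu> \<in> T \<Longrightarrow> card \<nu> \<le> k1 \<Longrightarrow> card \<nu> \<le> k2 \<Longrightarrow>
   ten k1 T R V (\<lambda>_ _. None) \<nu> r = ten k2 T R V (\<lambda>_ _. None) \<nu> r"
proof (induction k1 arbitrary: k2 \<nu> r)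
  case 0
  then show ?case using node_card[OF "0.prems"(1)] by simp
next
  case (Suc k1)
  obtain k2' where k2: "k2 = Suc k2'" using Suc.prems node_card[OF Suc.prems(1)] by (cases k2) auto
  show ?case
  proof (cases "children T \<nu> = {}")
    case True
    then show ?thesis unfolding k2 by simp
  next
    case False
    have IH: "ten k1 T R V (\<lambda>_ _. None) c r' = ten k2' T R V (\<lambda>_ _. None) c r'" if "c \<in> children T \<nu>" for c r'
    proof (rule Suc.IH)
      show "c \<in> T" using ch_T[OF that] .
      show "card c \<le> k1" "card c \<le> k2'" using ch_card[OF Suc.prems(1) that] Suc.prems k2 by auto
    qed
    have p: "(\<Prod>c\<in>children T \<nu>. ten k1 T R V (\<lambda>_ _. None) c r' idx) = (\<Prod>c\<in>children T \<nu>. ten k2' T R V (\<lambda>_ _. None) c r' idx)" for r' idx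
      using IH by (intro prod.cong) auto
    show ?thesis unfolding k2 by (rule ext) (simp only: ten_Suc_int[OF False] p)
  qed
qed

lemma ten_rep_here: "ten k T R V (repat \<mu> X) \<mu> r = X r"
  by (cases k) (simp_all add: repat_def)

lemma ten_Suc_int_rep: "rep \<nu> r = None \<Longrightarrow> children T \<nu> \<noteq> {} \<Longrightarrow> ten (Suc k) T R V rep \<nu> r idx
   = (\<Sum>r'<R \<nu>. V \<nu> r' r * (\<Prod>c\<in>children T \<nu>. ten k T R V rep c r' idx))"
  by simp

lemma rep_intro:
  assumes "\<mu> \<in> T" "card \<mu> \<le> K"
  shows "\<nu> \<in> T \<Longrightarrow> \<mu> \<subseteq> \<nu> \<Longrightarrow> card \<nu> \<le> k \<Longrightarrow>
    ten k T R V (\<lambda>_ _. None) \<nu> r = ten k T R V (repat \<mu> (\<lambda>r'. ten K T R V (\<lambda>_ _. None) \<mu> r')) \<nu> r"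
proof (induction k arbitrary: \<nu> r)
  case 0
  then show ?case using node_card[OF "0.prems"(1)] by simp
next
  case (Suc k)
  show ?case
  proof (cases "\<nu> = \<mu>")
    case True
    show ?thesis unfolding True ten_rep_here using fuel[OF assms(1)] Suc.prems True assms(2) by blast
  next
    case False
    hence ps: "\<mu> \<subset> \<nu>" using Suc.prems by blast
    obtain c0 where c0: "c0 \<in> children T \<nu>" "\<mu> \<subseteq> c0" using exists_child[OF assms(1) Suc.prems(1) ps] by blast
    hence int: "children T \<nu> \<noteq> {}" by blast
    have rn: "repat \<mu> X \<nu> r = None" for X using False by (simp add: repat_def)
    have eqc: "ten k T R V (\<lambda>_ _. None) c r' = ten k T R V (repat \<mu> (\<lambda>r'. ten K T R V (\<lambda>_ _. None) \<mu> r')) c r'"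
      if c: "c \<in> children T \<nu>" for c r'
    proof (cases "c = c0")
      case True
      show ?thesis unfolding True
      proof (rule Suc.IH)
        show "c0 \<in> T" using ch_T[OF c0(1)] .
        show "\<mu> \<subseteq> c0" using c0(2) .
        show "card c0 \<le> k" using ch_card[OF Suc.prems(1) c0(1)] Suc.prems(3) by simp
      qed
    next
      case False
      have nm: "\<not> \<mu> \<subseteq> c" using ch_unique[OF assms(1) Suc.prems(1) c0 c] False by blast
      have h: "ten k T R V (repat \<mu> (\<lambda>r'. ten K T R V (\<lambda>_ _. None) \<mu> r')) c r' = ten k T R V (\<lambda>_ _. None) c r'"
        by (rule frame_none[OF ch_T[OF c] nm]) simp
      show ?thesis by (rule h[symmetric])
    qed
    have p: "(\<Prod>c\<in>children T \<nu>. ten k T R V (\<lambda>_ _. None) c r' idx) =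
       (\<Prod>c\<in>children T \<nu>. ten k T R V (repat \<mu> (\<lambda>r'. ten K T R V (\<lambda>_ _. None) \<mu> r')) c r' idx)" for r' idx
      using eqc by (intro prod.cong) auto
    show ?thesis by (rule ext) (simp only: ten_Suc_int[OF int] ten_Suc_int_rep[where rep="repat \<mu> (\<lambda>r'. ten K T R V (\<lambda>_ _. None) \<mu> r')", OF rn int] p)
  qed
qed

lemma cong_rep:
  assumes "\<mu> \<in> T" "\<forall>j r. ten j T R V rep \<mu> r = ten j T R V' rep \<mu> r"
    "\<forall>\<kappa>\<in>T. \<not> \<kappa> \<subseteq> \<mu> \<longrightarrow> V \<kappa> = V' \<kappa>"
  shows "\<nu> \<in> T \<Longrightarrow> \<not> \<nu> \<subset> \<mu> \<Longrightarrow> ten k T R V rep \<nu> r = ten k T R V' rep \<nu> r"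
proof (induction k arbitrary: \<nu> r)
  case 0
  then show ?case by simp
next
  case (Suc k)
  show ?case
  proof (cases "\<nu> = \<mu>")
    case True
    then show ?thesis using assms(2) by blast
  next
    case False
    have e: "V \<nu> = V' \<nu>" using assms(3) Suc.prems False by blast
    have IH: "ten k T R V rep c r' = ten k T R V' rep c r'" if "c \<in> children T \<nu>" for c r'
    proof (rule Suc.IH)
      show "c \<in> T" using ch_T[OF that] .
      show "\<not> c \<subset> \<mu>" using child_not_below[OF assms(1) Suc.prems False that] .
    qed
    have p: "(\<Prod>c\<in>children T \<nu>. ten k T R V rep c r' idx) = (\<Prod>c\<in>children T \<nu>. ten k T R V' rep c r' idx)" for r' idx
      using IH by (intro prod.cong) auto
    show ?thesis unfolding ten.simps e p ..
  qed
qed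

lemma col:
  assumes "\<mu> \<in> T" "\<forall>i. V \<mu> i r = V' \<mu> i r" "\<forall>\<kappa>\<in>T. \<kappa> \<subset> \<mu> \<longrightarrow> V \<kappa> = V' \<kappa>"
  shows "ten k T R V (\<lambda>_ _. None) \<mu> r = ten k T R V' (\<lambda>_ _. None) \<mu> r"
proof (cases k)
  case 0
  then show ?thesis by simp
next
  case (Suc k')
  show ?thesis
  proof (cases "children T \<mu> = {}")
    case True
    then show ?thesis unfolding Suc using assms(2) by simp
  next
    case False
    have fr: "ten k' T R V (\<lambda>_ _. None) c r' = ten k' T R V' (\<lambda>_ _. None) c r'" if "c \<in> children T \<mu>" for c r'
    proof (rule frame)
      show "c \<in> T" using ch_T[OF that] .
      show "\<forall>\<kappa>\<in>T. \<kappa> \<subseteq> c \<longrightarrow> V \<kappa> = V' \<kappa> \<and> (\<lambda>_ _. None) \<kappa> = (\<lambda>_ _. None) \<kappa>"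
        using assms(3) ch_sub[OF that] by blast
    qed
    have p: "(\<Prod>c\<in>children T \<mu>. ten k' T R V (\<lambda>_ _. None) c r' idx) = (\<Prod>c\<in>children T \<mu>. ten k' T R V' (\<lambda>_ _. None) c r' idx)" for r' idx
      using fr by (intro prod.cong) auto
    show ?thesis unfolding Suc by (rule ext) (simp only: ten_Suc_int[OF False] p assms(2))
  qed
qed

lemma zcol:
  assumes "\<forall>i. V \<mu> i r = 0"
  shows "ten k T R V (\<lambda>_ _. None) \<mu> r = (\<lambda>_. 0)"
  using assms by (cases k) auto

lemma irr:
  "\<nu> \<in> T \<Longrightarrow> r < rk_pa N T D R \<nu> \<Longrightarrow> idx \<in> tensor_index_set N D \<Longrightarrow>
   (\<forall>\<kappa>\<in>T. \<kappa> \<subseteq> \<nu> \<longrightarrow> (\<forall>i j. i < rk T D R \<kappa> \<longrightarrow> j < rk_pa N T D R \<kappa> \<longrightarrow> V \<kappa> i j = V' \<kappa> i j)) \<Longrightarrow>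
   ten k T R V (\<lambda>_ _. None) \<nu> r idx = ten k T R V' (\<lambda>_ _. None) \<nu> r idx"
proof (induction k arbitrary: \<nu> r)
  case 0
  then show ?case by simp
next
  case (Suc k)
  show ?case
  proof (cases "children T \<nu> = {}")
    case True
    have n: "the_elem \<nu> \<in> {1..N}" using leaf_single[OF Suc.prems(1) True] by blast
    hence "idx (the_elem \<nu>) < rk T D R \<nu>" using Suc.prems(3) True
      unfolding tensor_index_set_def rk_def by auto
    then show ?thesis unfolding ten_Suc_leaf[OF True] using Suc.prems by blast
  next
    case False
    have rkn: "rk T D R \<nu> = R \<nu>" using False by (simp add: rk_def)
    have e: "V \<nu> r' r = V' \<nu> r' r" if "r' < R \<nu>" for r'
      using Suc.prems(1,2,4) that unfolding rkn[symmetric] by blast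
    have IH: "ten k T R V (\<lambda>_ _. None) c r' idx = ten k T R V' (\<lambda>_ _. None) c r' idx"
      if c: "c \<in> children T \<nu>" and r': "r' < R \<nu>" for c r'
    proof (rule Suc.IH)
      show "c \<in> T" using ch_T[OF c] .
      show "r' < rk_pa N T D R c" unfolding rk_pa_ch[OF Suc.prems(1) c] rk_def using False r' by simp
      show "idx \<in> tensor_index_set N D" using Suc.prems(3) .
      show "\<forall>\<kappa>\<in>T. \<kappa> \<subseteq> c \<longrightarrow> (\<forall>i j. i < rk T D R \<kappa> \<longrightarrow> j < rk_pa N T D R \<kappa> \<longrightarrow> V \<kappa> i j = V' \<kappa> i j)"
        using Suc.prems(4) ch_sub[OF c] by blast
    qed
    show ?thesis unfolding ten_Suc_int[OF False] using e IH
      by (intro sum.cong refl arg_cong2[where f="(*)"] prod.cong) auto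
  qed
qed

end

definition Eij :: "nat \<Rightarrow> nat \<Rightarrow> nat \<Rightarrow> nat \<Rightarrow> real" where
  "Eij i j = (\<lambda>a b. if a = i \<and> b = j then 1 else 0)"

lemma tinner_scale: "tinner N D X (\<lambda>idx. c * P idx) = c * tinner N D X P"
  unfolding tinner_def by (simp add: sum_distrib_left algebra_simps)

lemma tinner_sum: "tinner N D X (\<lambda>idx. \<Sum>j\<in>J. c j * B j idx) = (\<Sum>j\<in>J. c j * tinner N D X (B j))"
  unfolding tinner_def by (simp add: sum_distrib_left sum.swap[of _ J] algebra_simps)

lemma tinner_neg: "tinner N D (\<lambda>idx. - X idx) P = - tinner N D X P"
  unfolding tinner_def by (simp add: sum_negf)

lemma tinner_ge: "tinner N D X X \<ge> 0"
  unfolding tinner_def by (intro sum_nonneg) simp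

lemma tnorm_scale: "tnorm N D (\<lambda>idx. c * P idx) = \<bar>c\<bar> * tnorm N D P"
proof -
  have "tinner N D (\<lambda>idx. c * P idx) (\<lambda>idx. c * P idx) = c\<^sup>2 * tinner N D P P"
    unfolding tinner_def by (simp add: sum_distrib_left power2_eq_square algebra_simps)
  thus ?thesis unfolding tnorm_def by (simp add: real_sqrt_mult)
qed

lemma tnorm_ge: "tnorm N D X \<ge> 0" unfolding tnorm_def using tinner_ge by simp

lemma chain_grad:
  assumes g: "is_gradient N D L G" and X: "X \<in> tensor_space N D" and P: "P \<in> tensor_space N D"
  shows "((\<lambda>x. L (\<lambda>idx. X idx + (x - x0) * P idx)) has_real_derivative tinner N D (G X) P) (at x0)"
proof -
  let ?f = "\<lambda>x. L (\<lambda>idx. X idx + (x - x0) * P idx)"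
  have f0: "?f x0 = L X" by simp
  define K where "K = tnorm N D P + 1"
  have K: "K > 0" "tnorm N D P \<le> K" unfolding K_def using tnorm_ge[of N D P] by auto
  show ?thesis unfolding has_field_derivative_iff
  proof (rule LIM_I)
    fix r :: real assume r: "0 < r"
    define eps where "eps = r / (2 * K)"
    have eps: "eps > 0" using r K unfolding eps_def by simp
    obtain \<delta> where d: "\<delta> > 0" and dH: "\<And>H. H \<in> tensor_space N D \<Longrightarrow> tnorm N D H < \<delta> \<Longrightarrow>
        \<bar>L (\<lambda>idx. X idx + H idx) - L X - tinner N D (G X) H\<bar> \<le> eps * tnorm N D H"
      using g X eps unfolding is_gradient_def by meson
    show "\<exists>s>0. \<forall>x. x \<noteq> x0 \<and> norm (x - x0) < s \<longrightarrow>
        norm ((?f x - ?f x0) / (x - x0) - tinner N D (G X) P) < r"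
    proof (intro exI[of _ "\<delta> / K"] conjI allI impI)
      show "\<delta> / K > 0" using d K by simp
      fix x assume x: "x \<noteq> x0 \<and> norm (x - x0) < \<delta> / K"
      let ?H = "\<lambda>idx. (x - x0) * P idx"
      have Hs: "?H \<in> tensor_space N D" using P unfolding tensor_space_def by simp
      have nH: "tnorm N D ?H = \<bar>x - x0\<bar> * tnorm N D P" by (rule tnorm_scale)
      have "\<bar>x - x0\<bar> * tnorm N D P \<le> \<bar>x - x0\<bar> * K" using K by (simp add: mult_left_mono)
      also have "\<dots> < \<delta>" using x K by (simp add: pos_less_divide_eq)
      finally have "tnorm N D ?H < \<delta>" using nH by simp
      from dH[OF Hs this] have b: "\<bar>?f x - L X - (x - x0) * tinner N D (G X) P\<bar> \<le> eps * (\<bar>x - x0\<bar> * tnorm N D P)"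
        unfolding nH tinner_scale .
      have xx: "\<bar>x - x0\<bar> > 0" using x by simp
      have "(?f x - ?f x0) / (x - x0) - tinner N D (G X) P = (?f x - L X - (x - x0) * tinner N D (G X) P) / (x - x0)"
        using x f0 by (simp add: field_simps)
      hence "norm ((?f x - ?f x0) / (x - x0) - tinner N D (G X) P) = \<bar>?f x - L X - (x - x0) * tinner N D (G X) P\<bar> / \<bar>x - x0\<bar>"
        by simp
      also have "\<dots> \<le> eps * tnorm N D P"
        using b xx by (simp add: divide_le_eq algebra_simps)
      also have "\<dots> \<le> eps * K" using eps K by simp
      also have "\<dots> < r" using r K unfolding eps_def by simp
      finally show "norm ((?f x - ?f x0) / (x - x0) - tinner N D (G X) P) < r" .
    qed
  qed
qed

definition RowP :: "weights \<Rightarrow> nat set \<Rightarrow> nat \<Rightarrow> nat \<Rightarrow> nat \<Rightarrow> real" where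
  "RowP V \<nu> r = (\<lambda>i j. if i = r then V \<nu> r j else 0)"
definition ColP :: "weights \<Rightarrow> nat set \<Rightarrow> nat \<Rightarrow> nat \<Rightarrow> nat \<Rightarrow> real" where
  "ColP V \<nu> r = (\<lambda>i j. if j = r then V \<nu> i r else 0)"

context mtree begin

lemma end_space: "end_tensor N D T R V \<in> tensor_space N D"
  unfolding end_tensor_def restrict_tensor_def tensor_space_def by simp

lemma end_lin:
  assumes "\<mu> \<in> T"
  shows "end_tensor N D T R (V(\<mu> := \<lambda>i j. a * M1 i j + b * M2 i j))
     = (\<lambda>idx. a * end_tensor N D T R (V(\<mu> := M1)) idx + b * end_tensor N D T R (V(\<mu> := M2)) idx)"
  unfolding end_tensor_def restrict_tensor_def
  using lin[OF assms root_in node_sub[OF assms]] by (simp add: fun_eq_iff)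

lemma end_lin_sum:
  assumes "\<mu> \<in> T" "finite J"
  shows "end_tensor N D T R (V(\<mu> := \<lambda>i j. \<Sum>x\<in>J. c x * M x i j))
     = (\<lambda>idx. \<Sum>x\<in>J. c x * end_tensor N D T R (V(\<mu> := M x)) idx)"
  unfolding end_tensor_def restrict_tensor_def
  using lin_sum[OF assms(1) root_in node_sub[OF assms(1)] assms(2)] by (simp add: fun_eq_iff)

lemma end_irr:
  assumes "\<forall>\<kappa>\<in>T. \<forall>i j. i < rk T D R \<kappa> \<longrightarrow> j < rk_pa N T D R \<kappa> \<longrightarrow> V \<kappa> i j = V' \<kappa> i j"
  shows "end_tensor N D T R V = end_tensor N D T R V'"
proof -
  have "ten N T R V (\<lambda>_ _. None) {1..N} 0 idx = ten N T R V' (\<lambda>_ _. None) {1..N} 0 idx"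
    if "idx \<in> tensor_index_set N D" for idx
    using irr[OF root_in _ that] assms unfolding rk_pa_def by simp
  thus ?thesis unfolding end_tensor_def restrict_tensor_def by auto
qed

lemma partial:
  assumes "\<mu> \<in> T" "is_gradient N D L G"
  shows "partial_phi N D T R L V \<mu> i j = tinner N D (G (end_tensor N D T R V)) (end_tensor N D T R (V(\<mu> := Eij i j)))"
proof -
  let ?x0 = "V \<mu> i j"
  have w: "wupd V \<mu> i j x = V(\<mu> := \<lambda>a b. 1 * V \<mu> a b + (x - ?x0) * Eij i j a b)" for x
    unfolding wupd_def Eij_def by (auto simp: fun_eq_iff)
  have e: "phi_H N D T R L (wupd V \<mu> i j x) = L (\<lambda>idx. end_tensor N D T R V idx + (x - ?x0) * end_tensor N D T R (V(\<mu> := Eij i j)) idx)" for x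
    unfolding phi_H_def w end_lin[OF assms(1)] by simp
  have "((\<lambda>x. phi_H N D T R L (wupd V \<mu> i j x)) has_real_derivative tinner N D (G (end_tensor N D T R V)) (end_tensor N D T R (V(\<mu> := Eij i j)))) (at ?x0)"
    unfolding e by (rule chain_grad[OF assms(2) end_space end_space])
  thus ?thesis unfolding partial_phi_def by (rule DERIV_imp_deriv)
qed


lemma row_sum:
  assumes "\<nu> \<in> T"
  shows "(\<Sum>j<rk_pa N T D R \<nu>. V \<nu> r j * tinner N D Y (end_tensor N D T R (V(\<nu> := Eij r j))))
       = tinner N D Y (end_tensor N D T R (V(\<nu> := RowP V \<nu> r)))"
proof -
  have "(\<Sum>j<rk_pa N T D R \<nu>. V \<nu> r j * tinner N D Y (end_tensor N D T R (V(\<nu> := Eij r j))))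
     = tinner N D Y (end_tensor N D T R (V(\<nu> := \<lambda>a b. \<Sum>j<rk_pa N T D R \<nu>. V \<nu> r j * Eij r j a b)))"
    unfolding end_lin_sum[OF assms finite_lessThan] tinner_sum ..
  also have "end_tensor N D T R (V(\<nu> := \<lambda>a b. \<Sum>j<rk_pa N T D R \<nu>. V \<nu> r j * Eij r j a b))
      = end_tensor N D T R (V(\<nu> := RowP V \<nu> r))"
  proof (rule end_irr, intro ballI allI impI)
    fix \<kappa> i j assume "\<kappa> \<in> T" "i < rk T D R \<kappa>" and j: "j < rk_pa N T D R \<kappa>"
    show "(V(\<nu> := \<lambda>a b. \<Sum>j<rk_pa N T D R \<nu>. V \<nu> r j * Eij r j a b)) \<kappa> i j = (V(\<nu> := RowP V \<nu> r)) \<kappa> i j"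
    proof (cases "\<kappa> = \<nu>")
      case True
      have "(\<Sum>j'<rk_pa N T D R \<nu>. V \<nu> r j' * Eij r j' i j) = (\<Sum>j'<rk_pa N T D R \<nu>. if j' = j then (if i = r then V \<nu> r j else 0) else 0)"
        unfolding Eij_def by (intro sum.cong) auto
      also have "\<dots> = RowP V \<nu> r i j" using j True unfolding RowP_def by simp
      finally show ?thesis using True by simp
    qed simp
  qed
  finally show ?thesis .
qed

lemma col_sum:
  assumes "\<nu> \<in> T"
  shows "(\<Sum>i<rk T D R \<nu>. V \<nu> i r * tinner N D Y (end_tensor N D T R (V(\<nu> := Eij i r))))
       = tinner N D Y (end_tensor N D T R (V(\<nu> := ColP V \<nu> r)))"
proof -
  have "(\<Sum>i<rk T D R \<nu>. V \<nu> i r * tinner N D Y (end_tensor N D T R (V(\<nu> := Eij i r))))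
     = tinner N D Y (end_tensor N D T R (V(\<nu> := \<lambda>a b. \<Sum>i<rk T D R \<nu>. V \<nu> i r * Eij i r a b)))"
    unfolding end_lin_sum[OF assms finite_lessThan] tinner_sum ..
  also have "end_tensor N D T R (V(\<nu> := \<lambda>a b. \<Sum>i<rk T D R \<nu>. V \<nu> i r * Eij i r a b))
      = end_tensor N D T R (V(\<nu> := ColP V \<nu> r))"
  proof (rule end_irr, intro ballI allI impI)
    fix \<kappa> i j assume "\<kappa> \<in> T" and i: "i < rk T D R \<kappa>" and "j < rk_pa N T D R \<kappa>"
    show "(V(\<nu> := \<lambda>a b. \<Sum>i<rk T D R \<nu>. V \<nu> i r * Eij i r a b)) \<kappa> i j = (V(\<nu> := ColP V \<nu> r)) \<kappa> i j"
    proof (cases "\<kappa> = \<nu>")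
      case True
      have "(\<Sum>i'<rk T D R \<nu>. V \<nu> i' r * Eij i' r i j) = (\<Sum>i'<rk T D R \<nu>. if i' = i then (if j = r then V \<nu> i r else 0) else 0)"
        unfolding Eij_def by (intro sum.cong) auto
      also have "\<dots> = ColP V \<nu> r i j" using i True unfolding ColP_def by simp
      finally show ?thesis using True by simp
    qed simp
  qed
  finally show ?thesis .
qed

lemma chain_eq:
  assumes nu: "\<nu> \<in> T" and c1: "c1 \<in> children T \<nu>" and r0: "r0 < R \<nu>"
  shows "end_tensor N D T R (V(c1 := ColP V c1 r0)) = end_tensor N D T R (V(\<nu> := RowP V \<nu> r0))"
proof -
  have int: "children T \<nu> \<noteq> {}" using c1 by blast
  have c1T: "c1 \<in> T" using ch_T[OF c1] .
  have ne: "c1 \<noteq> \<nu>" using ch_sub[OF c1] by blast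
  have c1ne: "c1 \<noteq> {}" using node_ne[OF c1T] .
  have rootnot: "\<not> {1..N} \<subset> \<nu>" using node_sub[OF nu] by blast
  define A where "A = V(\<nu> := RowP V \<nu> r0)"
  define B where "B = A(c1 := ColP V c1 r0)"
  define Cc where "Cc = V(c1 := ColP V c1 r0)"
  have BC: "B = Cc(\<nu> := RowP V \<nu> r0)" unfolding B_def A_def Cc_def using ne by (simp add: fun_upd_twist)
  have other: "ten j T R X (\<lambda>_ _. None) c r' = ten j T R (X(\<kappa>0 := M)) (\<lambda>_ _. None) c r'"
    if "c \<in> children T \<nu>" "c \<noteq> c1" "\<kappa>0 = c1" for c r' j X M \<kappa>0
  proof (rule frame)
    show "c \<in> T" using ch_T[OF that(1)] .
    have "c \<inter> c1 = {}" using ch_disj[OF nu that(1) c1 that(2)] .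
    thus "\<forall>\<kappa>\<in>T. \<kappa> \<subseteq> c \<longrightarrow> X \<kappa> = (X(\<kappa>0 := M)) \<kappa> \<and> (\<lambda>_ _. None) \<kappa> = (\<lambda>_ _. None) \<kappa>"
      using c1ne that(3) by auto
  qed
  have below: "ten j T R X (\<lambda>_ _. None) c r' = ten j T R (X(\<nu> := M)) (\<lambda>_ _. None) c r'"
    if "c \<in> children T \<nu>" for c r' j X M
  proof (rule frame)
    show "c \<in> T" using ch_T[OF that(1)] .
    show "\<forall>\<kappa>\<in>T. \<kappa> \<subseteq> c \<longrightarrow> X \<kappa> = (X(\<nu> := M)) \<kappa> \<and> (\<lambda>_ _. None) \<kappa> = (\<lambda>_ _. None) \<kappa>"
      using ch_sub[OF that(1)] by auto
  qed
  have AB: "end_tensor N D T R A = end_tensor N D T R B"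
  proof -
    have "ten k T R A (\<lambda>_ _. None) \<nu> r = ten k T R B (\<lambda>_ _. None) \<nu> r" for k r
    proof (cases k)
      case 0 then show ?thesis by simp
    next
      case (Suc j)
      have Anu: "A \<nu> = RowP V \<nu> r0" "B \<nu> = RowP V \<nu> r0" unfolding A_def B_def using ne by auto
      have pc: "ten j T R A (\<lambda>_ _. None) c r0 = ten j T R B (\<lambda>_ _. None) c r0" if c: "c \<in> children T \<nu>" for c
      proof (cases "c = c1")
        case True
        show ?thesis unfolding True
        proof (rule col[OF c1T])
          show "\<forall>i. A c1 i r0 = B c1 i r0" unfolding A_def B_def ColP_def using ne by simp
          show "\<forall>\<kappa>\<in>T. \<kappa> \<subset> c1 \<longrightarrow> A \<kappa> = B \<kappa>" unfolding B_def by auto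
        qed
      next
        case False
        show ?thesis unfolding B_def by (rule other[OF c False refl])
      qed
      have "(\<Sum>r'<R \<nu>. A \<nu> r' r * (\<Prod>c\<in>children T \<nu>. ten j T R A (\<lambda>_ _. None) c r' idx))
          = (\<Sum>r'<R \<nu>. B \<nu> r' r * (\<Prod>c\<in>children T \<nu>. ten j T R B (\<lambda>_ _. None) c r' idx))" for idx
      proof (rule sum.cong[OF refl])
        fix r' assume "r' \<in> {..<R \<nu>}"
        show "A \<nu> r' r * (\<Prod>c\<in>children T \<nu>. ten j T R A (\<lambda>_ _. None) c r' idx)
            = B \<nu> r' r * (\<Prod>c\<in>children T \<nu>. ten j T R B (\<lambda>_ _. None) c r' idx)"
        proof (cases "r' = r0")
          case True
          have "(\<Prod>c\<in>children T \<nu>. ten j T R A (\<lambda>_ _. None) c r' idx) = (\<Prod>c\<in>children T \<nu>. ten j T R B (\<lambda>_ _. None) c r' idx)"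
            unfolding True using pc by (intro prod.cong) auto
          then show ?thesis unfolding Anu by simp
        next
          case False
          then show ?thesis unfolding Anu RowP_def by simp
        qed
      qed
      then show ?thesis unfolding Suc by (intro ext) (simp only: ten_Suc_int[OF int])
    qed
    hence "ten N T R A (\<lambda>_ _. None) {1..N} 0 = ten N T R B (\<lambda>_ _. None) {1..N} 0"
    proof (intro cong_rep[OF nu] root_in rootnot)
      show "\<forall>\<kappa>\<in>T. \<not> \<kappa> \<subseteq> \<nu> \<longrightarrow> A \<kappa> = B \<kappa>" unfolding B_def using ch_sub[OF c1] by auto
    qed auto
    thus ?thesis unfolding end_tensor_def by simp
  qed
  have CB: "end_tensor N D T R Cc = end_tensor N D T R B"
  proof -
    have "ten k T R Cc (\<lambda>_ _. None) \<nu> r = ten k T R B (\<lambda>_ _. None) \<nu> r" for k r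
    proof (cases k)
      case 0 then show ?thesis by simp
    next
      case (Suc j)
      have Cnu: "Cc \<nu> = V \<nu>" "B \<nu> = RowP V \<nu> r0" unfolding Cc_def BC using ne by auto
      have pc: "ten j T R B (\<lambda>_ _. None) c r' = ten j T R Cc (\<lambda>_ _. None) c r'" if c: "c \<in> children T \<nu>" for c r'
        unfolding BC using below[OF c, symmetric] .
      have "(\<Sum>r'<R \<nu>. Cc \<nu> r' r * (\<Prod>c\<in>children T \<nu>. ten j T R Cc (\<lambda>_ _. None) c r' idx))
          = (\<Sum>r'<R \<nu>. B \<nu> r' r * (\<Prod>c\<in>children T \<nu>. ten j T R B (\<lambda>_ _. None) c r' idx))" for idx
      proof (rule sum.cong[OF refl])
        fix r' assume "r' \<in> {..<R \<nu>}"
        have pp: "(\<Prod>c\<in>children T \<nu>. ten j T R B (\<lambda>_ _. None) c r' idx) = (\<Prod>c\<in>children T \<nu>. ten j T R Cc (\<lambda>_ _. None) c r' idx)"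
          using pc by (intro prod.cong) auto
        show "Cc \<nu> r' r * (\<Prod>c\<in>children T \<nu>. ten j T R Cc (\<lambda>_ _. None) c r' idx)
            = B \<nu> r' r * (\<Prod>c\<in>children T \<nu>. ten j T R B (\<lambda>_ _. None) c r' idx)"
        proof (cases "r' = r0")
          case True
          then show ?thesis unfolding Cnu pp RowP_def by simp
        next
          case False
          have z: "ten j T R Cc (\<lambda>_ _. None) c1 r' = (\<lambda>_. 0)"
            by (rule zcol) (simp add: Cc_def ColP_def False)
          have "(\<Prod>c\<in>children T \<nu>. ten j T R Cc (\<lambda>_ _. None) c r' idx) = 0"
            using c1 z ch_fin by (intro prod_zero) (auto intro!: bexI[of _ c1])
          then show ?thesis unfolding Cnu pp RowP_def using False by simp
        qed
      qed
      then show ?thesis unfolding Suc by (intro ext) (simp only: ten_Suc_int[OF int])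
    qed
    hence "ten N T R Cc (\<lambda>_ _. None) {1..N} 0 = ten N T R B (\<lambda>_ _. None) {1..N} 0"
    proof (intro cong_rep[OF nu] root_in rootnot)
      show "\<forall>\<kappa>\<in>T. \<not> \<kappa> \<subseteq> \<nu> \<longrightarrow> Cc \<kappa> = B \<kappa>" unfolding BC by auto
    qed auto
    thus ?thesis unfolding end_tensor_def by simp
  qed
  show ?thesis using AB CB unfolding A_def Cc_def by simp
qed


lemma lc_end_eq:
  assumes nu: "\<nu> \<in> T" and int: "children T \<nu> \<noteq> {}" and r0: "r0 < R \<nu>"
    and sg: "lc_norm N D T R V \<nu> r0 = \<sigma>"
  shows "lc_end_tensor N D T R V \<nu> r0 =
     (if \<sigma> = 0 then (\<lambda>_. 0) else (\<lambda>idx. (1/\<sigma>) * end_tensor N D T R (V(\<nu> := RowP V \<nu> r0)) idx))"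
proof (cases "\<sigma> = 0")
  case True
  then show ?thesis unfolding lc_end_tensor_def sg by simp
next
  case False
  define Y where "Y = (\<lambda>r' idx. V \<nu> r0 r' / \<sigma> * (\<Prod>c\<in>children T \<nu>. ten N T R V (\<lambda>_ _. None) c r0 idx))"
  define V3 where "V3 = V(\<nu> := \<lambda>i j. (1/\<sigma>) * RowP V \<nu> r0 i j + 0 * RowP V \<nu> r0 i j)"
  have cardnu: "card \<nu> \<le> N" using node_sub[OF nu] card_mono[of "{1..N}" \<nu>] by simp
  have cardroot: "card {1..N} \<le> N" by simp
  have rootnot: "\<not> {1..N} \<subset> \<nu>" using node_sub[OF nu] by blast
  obtain N' where N': "N = Suc N'" using cardnu node_card[OF nu] by (cases N) auto
  have out: "ten N T R V3 (\<lambda>_ _. None) \<nu> r' = Y r'" for r'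
  proof (rule ext)
    fix idx
    have fr: "ten N' T R V3 (\<lambda>_ _. None) c r0 = ten N T R V (\<lambda>_ _. None) c r0" if c: "c \<in> children T \<nu>" for c
    proof -
      have "ten N' T R V3 (\<lambda>_ _. None) c r0 = ten N' T R V (\<lambda>_ _. None) c r0"
        unfolding V3_def
      proof (rule frame)
        show "c \<in> T" using ch_T[OF c] .
        show "\<forall>\<kappa>\<in>T. \<kappa> \<subseteq> c \<longrightarrow> (V(\<nu> := \<lambda>i j. 1 / \<sigma> * RowP V \<nu> r0 i j + 0 * RowP V \<nu> r0 i j)) \<kappa> = V \<kappa> \<and> (\<lambda>_ _. None) \<kappa> = (\<lambda>_ _. None) \<kappa>"
          using ch_sub[OF c] by auto
      qed
      also have "\<dots> = ten N T R V (\<lambda>_ _. None) c r0"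
        by (rule fuel[OF ch_T[OF c]]) (use ch_card[OF nu c] cardnu N' in simp_all)
      finally show ?thesis .
    qed
    have "ten N T R V3 (\<lambda>_ _. None) \<nu> r' idx = (\<Sum>r''<R \<nu>. V3 \<nu> r'' r' * (\<Prod>c\<in>children T \<nu>. ten N' T R V3 (\<lambda>_ _. None) c r'' idx))"
      unfolding N' by (rule ten_Suc_int[OF int])
    also have "\<dots> = (\<Sum>r''<R \<nu>. if r'' = r0 then V \<nu> r0 r' / \<sigma> * (\<Prod>c\<in>children T \<nu>. ten N' T R V3 (\<lambda>_ _. None) c r0 idx) else 0)"
      by (intro sum.cong) (auto simp: V3_def RowP_def)
    also have "\<dots> = V \<nu> r0 r' / \<sigma> * (\<Prod>c\<in>children T \<nu>. ten N' T R V3 (\<lambda>_ _. None) c r0 idx)"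
      using r0 by simp
    also have "\<dots> = Y r' idx" unfolding Y_def using fr by (simp cong: prod.cong)
    finally show "ten N T R V3 (\<lambda>_ _. None) \<nu> r' idx = Y r' idx" .
  qed
  have "ten N T R V3 (\<lambda>_ _. None) {1..N} 0 = ten N T R V3 (repat \<nu> (\<lambda>r'. ten N T R V3 (\<lambda>_ _. None) \<nu> r')) {1..N} 0"
    by (rule rep_intro[OF nu cardnu root_in node_sub[OF nu] cardroot])
  also have "\<dots> = ten N T R V3 (repat \<nu> Y) {1..N} 0" unfolding out ..
  also have "\<dots> = ten N T R V (repat \<nu> Y) {1..N} 0"
  proof (rule cong_rep[OF nu _ _ root_in rootnot])
    show "\<forall>j r. ten j T R V3 (repat \<nu> Y) \<nu> r = ten j T R V (repat \<nu> Y) \<nu> r" by (simp add: ten_rep_here)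
    show "\<forall>\<kappa>\<in>T. \<not> \<kappa> \<subseteq> \<nu> \<longrightarrow> V3 \<kappa> = V \<kappa>" unfolding V3_def by auto
  qed
  finally have e1: "end_tensor N D T R V3 = restrict_tensor N D (ten N T R V (repat \<nu> Y) {1..N} 0)"
    unfolding end_tensor_def by simp
  have e2: "lc_end_tensor N D T R V \<nu> r0 = restrict_tensor N D (ten N T R V (repat \<nu> Y) {1..N} 0)"
    unfolding lc_end_tensor_def sg Y_def repat_def using False by simp
  have e3: "end_tensor N D T R V3 = (\<lambda>idx. (1/\<sigma>) * end_tensor N D T R (V(\<nu> := RowP V \<nu> r0)) idx)"
    unfolding V3_def end_lin[OF nu] by simp
  show ?thesis using e1 e2 e3 False by simp
qed

end

theorem theorem1:
  fixes N :: nat and D :: "nat \<Rightarrow> nat" and T :: "nat set set"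
    and R :: "nat set \<Rightarrow> nat" and W :: "real \<Rightarrow> weights"
    and L :: "tensor \<Rightarrow> real" and G :: "tensor \<Rightarrow> tensor"
  assumes tree: "mode_tree N T"
    and D_pos: "\<forall>n\<in>{1..N}. D n > 0"
    and R_pos: "\<forall>\<nu>\<in>int_nodes T. R \<nu> > 0"
    and L_nonneg: "\<forall>X\<in>tensor_space N D. L X \<ge> 0"
    and L_grad: "is_gradient N D L G"
    and L_smooth: "locally_smooth N D G"
    and flow: "gradient_flow N D T R L W"
    and balanced: "unbalancedness N D T R (W 0) = 0"
  shows "\<forall>\<nu>\<in>int_nodes T. \<forall>r<R \<nu>. \<forall>t\<ge>0.
     ((\<lambda>s. lc_norm N D T R (W s) \<nu> r) has_real_derivative
        (lc_norm N D T R (W t) \<nu> r powr (2 - 2 / real (card (children T \<nu>) + 1))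
         * real (card (children T \<nu>) + 1)
         * tinner N D (\<lambda>idx. - G (end_tensor N D T R (W t)) idx)
                      (lc_end_tensor N D T R (W t) \<nu> r))) (at t within {0..})"
proof -
  interpret mtree N T using tree by unfold_locales
  have flow': "((\<lambda>s. W s \<mu> i j) has_real_derivative
      - tinner N D (G (end_tensor N D T R (W s))) (end_tensor N D T R ((W s)(\<mu> := Eij i j)))) (at s within {0..})"
    if "\<mu> \<in> T" "i < rk T D R \<mu>" "j < rk_pa N T D R \<mu>" "s \<ge> 0" for \<mu> i j s
  proof -
    have "((\<lambda>s. W s \<mu> i j) has_real_derivative - partial_phi N D T R L (W s) \<mu> i j) (at s within {0..})"
      using flow that unfolding gradient_flow_def by blast
    thus ?thesis unfolding partial[OF that(1) L_grad] .
  qed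
  show ?thesis
  proof (intro ballI allI impI)
    fix \<nu> r and t :: real
    assume nu: "\<nu> \<in> int_nodes T" and r: "r < R \<nu>" and t: "0 \<le> t"
    have nuT: "\<nu> \<in> T" and int: "children T \<nu> \<noteq> {}" using nu unfolding int_nodes_def by auto
    have rkn: "rk T D R \<nu> = R \<nu>" using int by (simp add: rk_def)
    define m where "m = card (children T \<nu>)"
    have m2: "m \<ge> 2" unfolding m_def by (rule two_children[OF nu])
    define P where "P = rk_pa N T D R \<nu>"
    define q where "q = (\<lambda>s. \<Sum>j<P. (W s \<nu> r j)^2)"
    define qc where "qc = (\<lambda>c s. \<Sum>i<rk T D R c. (W s c i r)^2)"
    define Cf where "Cf = (\<lambda>s. end_tensor N D T R ((W s)(\<nu> := RowP (W s) \<nu> r)))"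
    define h where "h = (\<lambda>s. tinner N D (\<lambda>idx. - G (end_tensor N D T R (W s)) idx) (Cf s))"
    have qnn: "q s \<ge> 0" for s unfolding q_def by (intro sum_nonneg) simp
    have dq: "(q has_real_derivative 2 * h s) (at s within {0..})" if s: "s \<ge> 0" for s
    proof -
      have d: "(q has_real_derivative (\<Sum>j<P. of_nat 2 * ((- tinner N D (G (end_tensor N D T R (W s))) (end_tensor N D T R ((W s)(\<nu> := Eij r j)))) * W s \<nu> r j ^ (2 - Suc 0)))) (at s within {0..})"
        unfolding q_def
        by (intro DERIV_sum DERIV_power flow'[OF nuT _ _ s]) (auto simp: rkn r P_def)
      have "(\<Sum>j<P. of_nat 2 * ((- tinner N D (G (end_tensor N D T R (W s))) (end_tensor N D T R ((W s)(\<nu> := Eij r j)))) * W s \<nu> r j ^ (2 - Suc 0)))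
          = - 2 * (\<Sum>j<P. W s \<nu> r j * tinner N D (G (end_tensor N D T R (W s))) (end_tensor N D T R ((W s)(\<nu> := Eij r j))))"
        by (simp add: sum_distrib_left algebra_simps)
      also have "\<dots> = 2 * h s"
        unfolding P_def row_sum[OF nuT] h_def Cf_def tinner_neg by simp
      finally show ?thesis by (rule DERIV_cong[OF d])
    qed
    have dqc: "(qc c has_real_derivative 2 * h s) (at s within {0..})" if c: "c \<in> children T \<nu>" and s: "s \<ge> 0" for c s
    proof -
      have cT: "c \<in> T" using ch_T[OF c] .
      have rpc: "r < rk_pa N T D R c" unfolding rk_pa_ch[OF nuT c] rkn using r .
      have d: "(qc c has_real_derivative (\<Sum>i<rk T D R c. of_nat 2 * ((- tinner N D (G (end_tensor N D T R (W s))) (end_tensor N D T R ((W s)(c := Eij i r)))) * W s c i r ^ (2 - Suc 0)))) (at s within {0..})"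
        unfolding qc_def
        by (intro DERIV_sum DERIV_power flow'[OF cT _ rpc s]) auto
      have "(\<Sum>i<rk T D R c. of_nat 2 * ((- tinner N D (G (end_tensor N D T R (W s))) (end_tensor N D T R ((W s)(c := Eij i r)))) * W s c i r ^ (2 - Suc 0)))
          = - 2 * (\<Sum>i<rk T D R c. W s c i r * tinner N D (G (end_tensor N D T R (W s))) (end_tensor N D T R ((W s)(c := Eij i r))))"
        by (simp add: sum_distrib_left algebra_simps)
      also have "\<dots> = 2 * h s"
        unfolding col_sum[OF cT] chain_eq[where R=R, OF nuT c r] h_def Cf_def tinner_neg by simp
      finally show ?thesis by (rule DERIV_cong[OF d])
    qed
    have bal: "qc c 0 = q 0" if c: "c \<in> children T \<nu>" for c
    proof -
      define S where "S = {\<bar>a - b\<bar> | a b \<nu> r. \<nu> \<in> int_nodes T \<and> r < R \<nu> \<and>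
                      a \<in> lc_sqnorms N D T R (W 0) \<nu> r \<and> b \<in> lc_sqnorms N D T R (W 0) \<nu> r}"
      define U where "U = (\<Union>\<nu>\<in>int_nodes T. \<Union>r\<in>{..<R \<nu>}. lc_sqnorms N D T R (W 0) \<nu> r)"
      have fI: "finite (int_nodes T)" using finT unfolding int_nodes_def by simp
      have fL: "finite (lc_sqnorms N D T R (W 0) \<nu>' r')" for \<nu>' r'
        unfolding lc_sqnorms_def using ch_fin by simp
      have fU: "finite U" unfolding U_def using fI fL by blast
      have "S \<subseteq> (\<lambda>(a, b). \<bar>a - b\<bar>) ` (U \<times> U)" unfolding S_def U_def by fastforce
      hence fS: "finite S" using fU by (meson finite_SigmaI finite_imageI finite_subset)
      let ?a = "(row_norm N D T R (W 0) \<nu> r)\<^sup>2" and ?b = "(col_norm D T R (W 0) c r)\<^sup>2"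
      have ab: "?a \<in> lc_sqnorms N D T R (W 0) \<nu> r" "?b \<in> lc_sqnorms N D T R (W 0) \<nu> r"
        unfolding lc_sqnorms_def using c by auto
      have "\<bar>?a - ?b\<bar> \<in> S" unfolding S_def using nu r ab by blast
      hence "\<bar>?a - ?b\<bar> \<le> Max (insert 0 S)" using fS by simp
      hence "\<bar>?a - ?b\<bar> \<le> 0" using balanced unfolding unbalancedness_def S_def by simp
      hence eq: "?a = ?b" by simp
      have "?a = q 0" unfolding row_norm_def q_def P_def by (simp add: sum_nonneg)
      moreover have "?b = qc c 0" unfolding col_norm_def qc_def by (simp add: sum_nonneg)
      ultimately show ?thesis using eq by simp
    qed
    have eqq: "qc c s = q s" if c: "c \<in> children T \<nu>" and s: "s \<ge> 0" for c s
    proof -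
      have "\<exists>k. \<forall>x\<in>{0::real..}. qc c x - q x = k"
      proof (rule has_field_derivative_zero_constant)
        show "convex {0::real..}" by (rule convex_real_interval)
        fix x :: real assume "x \<in> {0..}"
        hence "((\<lambda>x. qc c x - q x) has_real_derivative 2 * h x - 2 * h x) (at x within {0..})"
          using dqc[OF c] dq by (intro DERIV_diff) auto
        thus "((\<lambda>x. qc c x - q x) has_real_derivative 0) (at x within {0..})" by simp
      qed
      then obtain k where k: "\<forall>x\<in>{0::real..}. qc c x - q x = k" by blast
      have "k = 0" using k bal[OF c] by force
      thus ?thesis using k s by force
    qed
    have sig: "lc_norm N D T R (W s) \<nu> r = sqrt (q s) ^ (m+1)" if s: "s \<ge> 0" for s
    proof -
      have "lc_norm N D T R (W s) \<nu> r = sqrt (q s) * (\<Prod>c\<in>children T \<nu>. sqrt (qc c s))"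
        unfolding lc_norm_def row_norm_def col_norm_def q_def qc_def P_def ..
      also have "\<dots> = sqrt (q s) * (\<Prod>c\<in>children T \<nu>. sqrt (q s))"
        using eqq[OF _ s] by (simp cong: prod.cong)
      also have "\<dots> = sqrt (q s) ^ (m+1)" unfolding m_def by simp
      finally show ?thesis .
    qed
    define f where "f = (\<lambda>s. sqrt (q s) ^ (m+1))"
    have E: "lc_end_tensor N D T R (W t) \<nu> r =
       (if sqrt (q t) ^ (m+1) = 0 then (\<lambda>_. 0) else (\<lambda>idx. (1 / sqrt (q t) ^ (m+1)) * Cf t idx))"
      unfolding Cf_def by (rule lc_end_eq[OF nuT int r sig[OF t]])
    have fd: "(f has_real_derivative
        ((sqrt (q t) ^ (m+1)) powr (2 - 2 / real (m + 1)) * real (m + 1)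
         * tinner N D (\<lambda>idx. - G (end_tensor N D T R (W t)) idx) (lc_end_tensor N D T R (W t) \<nu> r))) (at t within {0..})"
    proof (cases "q t = 0")
      case False
      define y where "y = sqrt (q t)"
      have y: "y > 0" using False qnn[of t] unfolding y_def by simp
      have ds: "((\<lambda>s. sqrt (q s)) has_real_derivative inverse y / 2 * (2 * h t)) (at t within {0..})"
        unfolding y_def using DERIV_chain2[OF DERIV_real_sqrt dq[OF t]] False qnn[of t] by simp
      have dp: "(f has_real_derivative of_nat (m+1) * ((inverse y / 2 * (2 * h t)) * y ^ (m + 1 - Suc 0))) (at t within {0..})"
        unfolding f_def y_def[symmetric] using DERIV_power[OF ds, of "m+1"] unfolding y_def by simp
      have pw: "(y ^ (m+1)) powr (2 - 2 / real (m + 1)) = y ^ m * y ^ m"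
      proof -
        have "(y ^ (m+1)) powr (2 - 2 / real (m + 1)) = (y powr real (m+1)) powr (2 - 2 / real (m + 1))"
          unfolding powr_realpow[OF y] ..
        also have "\<dots> = y powr (real (m+1) * (2 - 2 / real (m + 1)))" by (rule powr_powr)
        also have "real (m+1) * (2 - 2 / real (m + 1)) = real (m + m)" by (simp add: field_simps)
        also have "y powr real (m + m) = y ^ m * y ^ m" unfolding powr_realpow[OF y] power_add ..
        finally show ?thesis .
      qed
      have ynz: "y ^ (m+1) \<noteq> 0" using y by simp
      have tg: "(y ^ (m+1)) powr (2 - 2 / real (m + 1)) * real (m + 1)
         * tinner N D (\<lambda>idx. - G (end_tensor N D T R (W t)) idx) (lc_end_tensor N D T R (W t) \<nu> r)
         = of_nat (m+1) * ((inverse y / 2 * (2 * h t)) * y ^ (m + 1 - Suc 0))"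
      proof -
        have ti: "tinner N D (\<lambda>idx. - G (end_tensor N D T R (W t)) idx) (lc_end_tensor N D T R (W t) \<nu> r)
            = (1 / y ^ (m+1)) * h t"
          unfolding E y_def[symmetric] if_not_P[OF ynz] tinner_scale h_def ..
        have ym: "y ^ (m+1) = y ^ m * y" by simp
        show ?thesis unfolding pw ti unfolding ym using y by (simp add: field_simps)
      qed
      show ?thesis unfolding y_def[symmetric] tg by (rule dp)
    next
      case True
      have m1: "m - 1 \<noteq> 0" using m2 by simp
      have zero: "(sqrt (q t) ^ (m+1)) powr (2 - 2 / real (m + 1)) = 0" using True by simp
      have "(f has_real_derivative 0) (at t within {0..})"
        unfolding has_field_derivative_iff
      proof -
        have feq: "(\<lambda>s. (f s - f t) / (s - t)) = (\<lambda>s. ((q s - q t) / (s - t)) * sqrt (q s) ^ (m - 1))"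
        proof
          fix s
          have "f s = sqrt (q s) ^ 2 * sqrt (q s) ^ (m - 1)"
            unfolding f_def power_add[symmetric] using m2 by (simp add: numeral_2_eq_2)
          also have "\<dots> = q s * sqrt (q s) ^ (m - 1)" using qnn[of s] by simp
          finally show "(f s - f t) / (s - t) = ((q s - q t) / (s - t)) * sqrt (q s) ^ (m - 1)"
            using True unfolding f_def by simp
        qed
        have l1: "((\<lambda>s. (q s - q t) / (s - t)) \<longlongrightarrow> 2 * h t) (at t within {0..})"
          using dq[OF t] unfolding has_field_derivative_iff .
        have cq: "(q \<longlongrightarrow> q t) (at t within {0..})"
          using DERIV_continuous[OF dq[OF t]] unfolding continuous_within .
        have l2: "((\<lambda>s. sqrt (q s) ^ (m - 1)) \<longlongrightarrow> sqrt (q t) ^ (m - 1)) (at t within {0..})"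
          by (intro tendsto_power tendsto_real_sqrt cq)
        have lim: "((\<lambda>s. ((q s - q t) / (s - t)) * sqrt (q s) ^ (m - 1)) \<longlongrightarrow> 2 * h t * sqrt (q t) ^ (m - 1)) (at t within {0..})"
          by (rule tendsto_mult[OF l1 l2])
        have z: "2 * h t * sqrt (q t) ^ (m - 1) = 0" using True m1 by simp
        show "((\<lambda>s. (f s - f t) / (s - t)) \<longlongrightarrow> 0) (at t within {0..})"
          unfolding feq using lim unfolding z .
      qed
      thus ?thesis unfolding zero by simp
    qed
    show "((\<lambda>s. lc_norm N D T R (W s) \<nu> r) has_real_derivative
        (lc_norm N D T R (W t) \<nu> r powr (2 - 2 / real (card (children T \<nu>) + 1))
         * real (card (children T \<nu>) + 1)
         * tinner N D (\<lambda>idx. - G (end_tensor N D T R (W t)) idx)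
                      (lc_end_tensor N D T R (W t) \<nu> r))) (at t within {0..})"
      unfolding sig[OF t] m_def[symmetric]
    proof (rule has_field_derivative_transform_within[OF fd zero_less_one])
      show "t \<in> {0..}" using t by simp
      fix x :: real assume "x \<in> {0..}"
      thus "f x = lc_norm N D T R (W x) \<nu> r" unfolding f_def using sig by simp
    qed
  qed
qed

end
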